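(* Let $X,E\in\mathbb{R}^{n\times d}$ and $\bar X=X+E$, and assume $\|X\|_{2,\infty}\le1$ and $\|\bar X\|_{2,\infty}\le1$. Let $V,W\in\mathbb{R}^{d\times d}$ with $\|V\|\le1$ and $\|W\|\le\Gamma$. Define $A=\mathrm{softmax}(XWX^\top)XV$ and $\bar A=\mathrm{softmax}(\bar XW\bar X^\top)\bar XV$, with softmax applied row-wise. Then $$\|A\|_{2,\infty}\le1,\quad\|\bar A\|_{2,\infty}\le1,\quad \|A-\bar A\|_{2,1}\le(2\Gamma+1)e^{2\Gamma}\|E\|_{2,1}.$$
   Context: For a matrix $Z$, $\|Z\|_{2,p}$ denotes the $\ell_p$ norm of the vector of Euclidean norms of its rows. $\|\cdot\|$ on matrices is the spectral norm. *)

theory Defs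
  imports "HOL-Analysis.Analysis"
begin

definition norm_2inf :: "real^'d^'n \<Rightarrow> real" where
  "norm_2inf Z = Max (range (\<lambda>i. norm (Z $ i)))"

definition norm_21 :: "real^'d^'n \<Rightarrow> real" where
  "norm_21 Z = (\<Sum>i\<in>UNIV. norm (Z $ i))"

definition spec_norm :: "real^'d^'m \<Rightarrow> real" where
  "spec_norm M = onorm (\<lambda>x. M *v x)"

definition softmax :: "real^'k^'n \<Rightarrow> real^'k^'n" where
  "softmax M = (\<chi> i j. exp (M $ i $ j) / (\<Sum>k\<in>UNIV. exp (M $ i $ k)))"

end

theory Submission imports Defs begin


lemma spec_bound:
  fixes M :: "real^'d^'m"
  assumes "spec_norm M \<le> G"
  shows "norm (M *v x) \<le> G * norm x"
proof -
  have "norm (M *v x) \<le> spec_norm M * norm x"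
    unfolding spec_norm_def using onorm[of "\<lambda>x. M *v x"] by simp
  also have "\<dots> \<le> G * norm x" using assms by (simp add: mult_right_mono)
  finally show ?thesis .
qed

lemma spec_nonneg: "spec_norm (M::real^'d^'m) \<ge> 0"
  unfolding spec_norm_def by (rule onorm_pos_le) simp

lemma spec_bound_left:
  fixes M :: "real^'d^'m"
  assumes "spec_norm M \<le> G"
  shows "norm (v v* M) \<le> G * norm v"
proof -
  let ?y = "v v* M"
  have "norm ?y ^ 2 = inner ?y ?y" by (simp add: power2_norm_eq_inner)
  also have "\<dots> = inner v (M *v ?y)" by (simp add: dot_lmul_matrix)
  also have "\<dots> \<le> norm v * norm (M *v ?y)" by (rule norm_cauchy_schwarz)
  also have "\<dots> \<le> norm v * (G * norm ?y)"
    by (rule mult_left_mono[OF spec_bound[OF assms]]) simp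
  finally have h: "norm ?y * norm ?y \<le> (G * norm v) * norm ?y" by (simp add: power2_eq_square algebra_simps)
  show ?thesis
  proof (cases "norm ?y = 0")
    case True
    then show ?thesis using spec_nonneg[of M] assms by simp
  next
    case False
    then have "norm ?y > 0" by simp
    then show ?thesis using h by simp
  qed
qed

lemma inner_bound: "\<bar>inner x y\<bar> \<le> norm x * norm (y::'a::real_inner)"
  by (rule Cauchy_Schwarz_ineq2)

lemma score_entry:
  fixes X Y :: "real^'d^'n" and W :: "real^'d^'d"
  shows "(X ** W ** transpose Y) $ i $ j = inner (X $ i) (W *v (Y $ j))"
  by (simp add: matrix_matrix_mult_def matrix_vector_mult_def inner_vec_def transpose_def
      sum_distrib_left sum_distrib_right mult.assoc) (rule sum.swap)

lemma mult_row:
  fixes P :: "real^'n^'m" and X :: "real^'d^'n"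
  shows "(P ** X) $ i = (\<Sum>j\<in>UNIV. P $ i $ j *\<^sub>R X $ j)"
  by (simp add: matrix_matrix_mult_def vec_eq_iff sum_component)

lemma mult_row_V:
  fixes M :: "real^'d^'n" and V :: "real^'e^'d"
  shows "(M ** V) $ i = (M $ i) v* V"
  by (simp add: matrix_matrix_mult_def vector_matrix_mult_def vec_eq_iff mult.commute)


lemma DERIV_exp_comp:
  "(g has_real_derivative D) (at t) \<Longrightarrow> ((\<lambda>s. exp (g s)) has_real_derivative exp (g t) * D) (at t)"
  by (rule DERIV_chain2[OF DERIV_exp])

lemma softmax_deriv:
  fixes f y :: "'a::finite \<Rightarrow> real \<Rightarrow> real" and f' y' :: "'a \<Rightarrow> real"
  assumes df: "\<And>j. (f j has_real_derivative f' j) (at t)"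
    and dy: "\<And>j. (y j has_real_derivative y' j) (at t)"
  defines "Z \<equiv> \<Sum>k\<in>UNIV. exp (f k t)"
  shows "((\<lambda>s. \<Sum>j\<in>UNIV. exp (f j s) / (\<Sum>k\<in>UNIV. exp (f k s)) * y j s) has_real_derivative
     (\<Sum>j\<in>UNIV. exp (f j t) / Z * y' j
        + exp (f j t) / Z * (f' j - (\<Sum>k\<in>UNIV. exp (f k t) / Z * f' k)) * y j t)) (at t)"
proof -
  have eq: "(\<lambda>s. \<Sum>j\<in>UNIV. exp (f j s) / (\<Sum>k\<in>UNIV. exp (f k s)) * y j s)
      = (\<lambda>s. (\<Sum>j\<in>UNIV. exp (f j s) * y j s) / (\<Sum>k\<in>UNIV. exp (f k s)))"
    by (simp add: sum_divide_distrib)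
  have dN: "((\<lambda>s. \<Sum>j\<in>UNIV. exp (f j s) * y j s) has_real_derivative
      (\<Sum>j\<in>UNIV. exp (f j t) * f' j * y j t + y' j * exp (f j t))) (at t)"
    by (intro DERIV_sum DERIV_mult DERIV_exp_comp df dy)
  have dZ: "((\<lambda>s. \<Sum>k\<in>UNIV. exp (f k s)) has_real_derivative
      (\<Sum>k\<in>UNIV. exp (f k t) * f' k)) (at t)"
    by (intro DERIV_sum DERIV_exp_comp df)
  have Zpos: "Z > 0" unfolding Z_def by (intro sum_pos) auto
  have "((\<lambda>s. (\<Sum>j\<in>UNIV. exp (f j s) * y j s) / (\<Sum>k\<in>UNIV. exp (f k s))) has_real_derivative
     ((\<Sum>j\<in>UNIV. exp (f j t) * f' j * y j t + y' j * exp (f j t)) * Z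
       - (\<Sum>j\<in>UNIV. exp (f j t) * y j t) * (\<Sum>k\<in>UNIV. exp (f k t) * f' k)) / (Z * Z)) (at t)"
    using DERIV_divide[OF dN dZ] Zpos unfolding Z_def by simp
  moreover have "((\<Sum>j\<in>UNIV. exp (f j t) * f' j * y j t + y' j * exp (f j t)) * Z
       - (\<Sum>j\<in>UNIV. exp (f j t) * y j t) * (\<Sum>k\<in>UNIV. exp (f k t) * f' k)) / (Z * Z)
     = (\<Sum>j\<in>UNIV. exp (f j t) / Z * y' j
        + exp (f j t) / Z * (f' j - (\<Sum>k\<in>UNIV. exp (f k t) / Z * f' k)) * y j t)"
  proof -
    have a: "(\<Sum>k\<in>UNIV. exp (f k t) / Z * f' k) = (\<Sum>k\<in>UNIV. exp (f k t) * f' k) / Z"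
      by (simp add: sum_divide_distrib)
    show ?thesis using Zpos
      unfolding a
      by (simp add: field_simps sum_distrib_left sum_distrib_right sum.distrib sum_subtractf
          sum_divide_distrib[symmetric] power2_eq_square)
  qed
  ultimately show ?thesis unfolding eq by simp
qed


lemma poly_ineq:
  fixes u t :: real
  assumes u: "u \<ge> 0" and t0: "0 \<le> t" and t1: "t \<le> 1"
  shows "(1+2*u) * ((2-t) / (1+u*t) + t / (1+u*(4-t))) / 2 + u*t*(2-t) \<le> 1 + 2*u"
proof -
  define D1 where "D1 = 1 + u*t"
  define D2 where "D2 = 1 + u*(4-t)"
  have D1: "D1 > 0" unfolding D1_def using u t0 by (simp add: add_pos_nonneg)
  have D2: "D2 > 0" unfolding D2_def using u t1 by (simp add: add_pos_nonneg)
  have key: "2*(1+2*u)*D1*D2 - (1+2*u)*((2-t)*D2 + t*D1) - 2*u*t*(2-t)*D1*D2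
     = 2*u*t*(1 + u*(2+t) + u^2*(8-10*t+6*t^2-t^3))"
    unfolding D1_def D2_def by (simp add: algebra_simps power2_eq_square power3_eq_cube)
  have c: "8-10*t+6*t^2-t^3 \<ge> 0"
  proof -
    have "t^3 \<le> t^2" using t0 t1 by (simp add: power3_eq_cube power2_eq_square mult_left_le)
    moreover have "5*(t-1)^2 + 3 \<ge> (0::real)" by simp
    ultimately show ?thesis by (simp add: power2_eq_square algebra_simps)
  qed
  have "0 \<le> 2*u*t*(1 + u*(2+t) + u^2*(8-10*t+6*t^2-t^3))"
    using u t0 c by (intro mult_nonneg_nonneg add_nonneg_nonneg) auto
  hence "(1+2*u)*((2-t)*D2 + t*D1) + 2*u*t*(2-t)*D1*D2 \<le> 2*(1+2*u)*D1*D2"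
    using key by linarith
  hence "((1+2*u)*((2-t)*D2 + t*D1) + 2*u*t*(2-t)*D1*D2) / (2*D1*D2) \<le> 1+2*u"
    using D1 D2 by (simp add: divide_le_eq algebra_simps)
  moreover have "((1+2*u)*((2-t)*D2 + t*D1) + 2*u*t*(2-t)*D1*D2) / (2*D1*D2)
     = (1+2*u) * ((2-t) / D1 + t / D2) / 2 + u*t*(2-t)"
    using D1 D2 by (simp add: field_simps)
  ultimately show ?thesis unfolding D1_def D2_def by simp
qed

lemma exp_neg_le: "x \<ge> 0 \<Longrightarrow> exp (-x) \<le> 1 / (1 + (x::real))"
proof -
  assume "x \<ge> 0"
  have "1 + x \<le> exp x" by (rule exp_ge_add_one_self)
  hence "1 / exp x \<le> 1 / (1+x)" using \<open>x \<ge> 0\<close> by (intro divide_left_mono) auto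
  thus ?thesis by (simp add: exp_minus field_simps)
qed

lemma final_ineq:
  fixes u m :: real
  assumes u: "u \<ge> 0" and m0: "0 \<le> m" and m1: "m \<le> 1"
  shows "(1+2*u) * ((1+m) * exp (u*(1+m)) + (1-m) * exp (-(u*(1+m)))) / 2
         + u * exp (2*u) * (1 - m^2) \<le> (1+2*u) * exp (2*u)"
proof -
  define t where "t = 1 - m"
  have t0: "0 \<le> t" and t1: "t \<le> 1" using m0 m1 unfolding t_def by auto
  have e1: "exp (u*(1+m)) = exp (2*u) * exp (-(u*t))"
    unfolding t_def by (simp add: exp_add[symmetric] algebra_simps)
  have e2: "exp (-(u*(1+m))) = exp (2*u) * exp (-(u*(4-t)))"
    unfolding t_def by (simp add: exp_add[symmetric] algebra_simps)
  have p: "exp (-(u*t)) \<le> 1 / (1+u*t)" using u t0 by (intro exp_neg_le) simp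
  have q: "exp (-(u*(4-t))) \<le> 1 / (1+u*(4-t))" using u t1 by (intro exp_neg_le) simp
  have "(1+2*u) * ((2-t) * exp (-(u*t)) + t * exp (-(u*(4-t)))) / 2 + u*t*(2-t)
      \<le> (1+2*u) * ((2-t) / (1+u*t) + t / (1+u*(4-t))) / 2 + u*t*(2-t)"
  proof -
    have "(2-t) * exp (-(u*t)) \<le> (2-t) * (1 / (1+u*t))" using p t1 by (intro mult_left_mono) auto
    moreover have "t * exp (-(u*(4-t))) \<le> t * (1 / (1+u*(4-t)))" using q t0 by (intro mult_left_mono) auto
    ultimately show ?thesis using u by (intro add_right_mono divide_right_mono mult_left_mono) auto
  qed
  also have "\<dots> \<le> 1 + 2*u" by (rule poly_ineq[OF u t0 t1])
  finally have main: "(1+2*u) * ((2-t) * exp (-(u*t)) + t * exp (-(u*(4-t)))) / 2 + u*t*(2-t) \<le> 1+2*u" .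
  have "1 - m^2 = t*(2-t)" unfolding t_def by (simp add: power2_eq_square algebra_simps)
  hence "(1+2*u) * ((1+m) * exp (u*(1+m)) + (1-m) * exp (-(u*(1+m)))) / 2
         + u * exp (2*u) * (1 - m^2)
       = exp (2*u) * ((1+2*u) * ((2-t) * exp (-(u*t)) + t * exp (-(u*(4-t)))) / 2 + u*t*(2-t))"
    unfolding e1 e2 by (simp add: t_def algebra_simps)
  also have "\<dots> \<le> exp (2*u) * (1+2*u)" using main by (intro mult_left_mono) auto
  finally show ?thesis by (simp add: mult.commute)
qed


lemma chord_exp:
  fixes a s :: real
  assumes "\<bar>s\<bar> \<le> a"
  shows "2*a*exp s \<le> (a+s)*exp a + (a-s)*exp (-a)"
proof (cases "a = 0")
  case True then show ?thesis using assms by simp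
next
  case False
  hence a: "a > 0" using assms by linarith
  define th where "th = (a+s)/(2*a)"
  have th0: "0 \<le> th" and th1: "th \<le> 1" unfolding th_def using assms a by (auto simp: field_simps)
  have sx: "s = (1-th) *\<^sub>R (-a) + th *\<^sub>R a" unfolding th_def using a by (simp add: field_simps)
  have "exp s \<le> (1-th) * exp (-a) + th * exp a"
    unfolding sx by (rule convex_onD[OF exp_convex th0 th1]) auto
  hence "2*a*exp s \<le> 2*a*((1-th) * exp (-a) + th * exp a)" using a by simp
  also have "\<dots> = (a+s)*exp a + (a-s)*exp (-a)" unfolding th_def using a by (simp add: field_simps)
  finally show ?thesis .
qed

lemma row_var:
  fixes p :: "'i::finite \<Rightarrow> real" and x :: "'i \<Rightarrow> 'a::real_inner" and g w c :: 'a
  assumes p0: "\<And>j. p j \<ge> 0" and p1: "(\<Sum>j\<in>UNIV. p j) = 1" and w: "norm w \<le> 1"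
  shows "(\<Sum>j\<in>UNIV. p j * inner g (x j) * (inner w (x j) - (\<Sum>k\<in>UNIV. p k * inner w (x k))))
         \<le> norm g * (\<Sum>j\<in>UNIV. p j * (norm (x j - c))^2)"
proof -
  define xh where "xh = (\<Sum>k\<in>UNIV. p k *\<^sub>R x k)"
  have yh: "(\<Sum>k\<in>UNIV. p k * inner w (x k)) = inner w xh"
    unfolding xh_def by (simp add: inner_sum_right)
  have sd: "(\<Sum>j\<in>UNIV. p j *\<^sub>R (x j - xh)) = 0"
    by (simp add: scaleR_diff_right sum_subtractf xh_def p1 flip: scaleR_sum_left)
  have "(\<Sum>j\<in>UNIV. p j * inner g (x j) * (inner w (x j) - inner w xh))
      = (\<Sum>j\<in>UNIV. p j * inner g (x j - xh) * inner w (x j - xh)) + inner g xh * (\<Sum>j\<in>UNIV. p j * inner w (x j - xh))"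
    by (simp add: inner_diff_right algebra_simps sum.distrib sum_distrib_left sum_subtractf)
  also have "(\<Sum>j\<in>UNIV. p j * inner w (x j - xh)) = inner w (\<Sum>j\<in>UNIV. p j *\<^sub>R (x j - xh))"
    by (simp add: inner_sum_right)
  also have "\<dots> = 0" using sd by simp
  finally have e1: "(\<Sum>j\<in>UNIV. p j * inner g (x j) * (inner w (x j) - inner w xh))
      = (\<Sum>j\<in>UNIV. p j * inner g (x j - xh) * inner w (x j - xh))" by simp
  have "(\<Sum>j\<in>UNIV. p j * inner g (x j - xh) * inner w (x j - xh))
      \<le> (\<Sum>j\<in>UNIV. p j * (norm g * (norm (x j - xh))^2))"
  proof (intro sum_mono)
    fix j
    have "inner g (x j - xh) * inner w (x j - xh) \<le> \<bar>inner g (x j - xh)\<bar> * \<bar>inner w (x j - xh)\<bar>"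
      by (simp add: abs_mult[symmetric])
    also have "\<dots> \<le> (norm g * norm (x j - xh)) * (norm w * norm (x j - xh))"
      by (intro mult_mono Cauchy_Schwarz_ineq2) auto
    also have "\<dots> \<le> (norm g * norm (x j - xh)) * (1 * norm (x j - xh))"
      using w by (intro mult_left_mono mult_right_mono) auto
    finally have "inner g (x j - xh) * inner w (x j - xh) \<le> norm g * (norm (x j - xh))^2"
      by (simp add: power2_eq_square algebra_simps)
    thus "p j * inner g (x j - xh) * inner w (x j - xh) \<le> p j * (norm g * (norm (x j - xh))^2)"
      using p0[of j] by (simp add: mult.assoc mult_left_mono)
  qed
  also have "\<dots> = norm g * (\<Sum>j\<in>UNIV. p j * (norm (x j - xh))^2)"
    by (simp add: sum_distrib_left algebra_simps)
  also have "(\<Sum>j\<in>UNIV. p j * (norm (x j - xh))^2) \<le> (\<Sum>j\<in>UNIV. p j * (norm (x j - c))^2)"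
  proof -
    have aux: "\<And>N A I C q::real. N = A + 2*I + C \<Longrightarrow> q*N = q*A + 2*(q*I) + q*C"
      by (simp add: algebra_simps)
    have "(\<Sum>j\<in>UNIV. p j * (norm (x j - c))^2)
       = (\<Sum>j\<in>UNIV. p j * (norm (x j - xh))^2 + 2 * (p j * inner (x j - xh) (xh - c)) + p j * (norm (xh - c))^2)"
    proof (intro sum.cong refl)
      fix j
      have "x j - c = (x j - xh) + (xh - c)" by simp
      hence "(norm (x j - c))^2 = (norm (x j - xh))^2 + 2 * inner (x j - xh) (xh - c) + (norm (xh - c))^2"
        by (metis power2_norm_eq_inner inner_add_left inner_add_right inner_commute mult_2 add.assoc)
      thus "p j * (norm (x j - c))^2 = p j * (norm (x j - xh))^2 + 2 * (p j * inner (x j - xh) (xh - c)) + p j * (norm (xh - c))^2"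
        by (rule aux)
    qed
    also have "\<dots> = (\<Sum>j\<in>UNIV. p j * (norm (x j - xh))^2) + 2 * inner (\<Sum>j\<in>UNIV. p j *\<^sub>R (x j - xh)) (xh - c)
        + (\<Sum>j\<in>UNIV. p j) * (norm (xh - c))^2"
      by (simp only: sum.distrib sum_distrib_left sum_distrib_right inner_sum_left inner_scaleR_left)
    also have "\<dots> = (\<Sum>j\<in>UNIV. p j * (norm (x j - xh))^2) + (norm (xh - c))^2"
      using sd p1 by simp
    finally show ?thesis by simp
  qed
  hence "norm g * (\<Sum>j\<in>UNIV. p j * (norm (x j - xh))^2) \<le> norm g * (\<Sum>j\<in>UNIV. p j * (norm (x j - c))^2)"
    by (intro mult_left_mono) auto
  finally show ?thesis unfolding yh using e1 by simp
qed


lemma var_uniform: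
  fixes x :: "'i::finite \<Rightarrow> 'a::real_inner"
  defines "n \<equiv> real CARD('i)"
  defines "xb \<equiv> (1/n) *\<^sub>R (\<Sum>k\<in>UNIV. x k)"
  shows "(\<Sum>j\<in>UNIV. (norm (x j - xb))^2) = (\<Sum>j\<in>UNIV. (norm (x j))^2) - n * (norm xb)^2"
proof -
  have n: "n > 0" unfolding n_def by simp
  have sx: "(\<Sum>k\<in>UNIV. x k) = n *\<^sub>R xb" unfolding xb_def using n by simp
  have "(\<Sum>j\<in>UNIV. (norm (x j - xb))^2) = (\<Sum>j\<in>UNIV. (norm (x j))^2 - 2 * inner (x j) xb + (norm xb)^2)"
    by (intro sum.cong refl) (simp add: power2_norm_eq_inner inner_diff_left inner_diff_right inner_commute)
  also have "\<dots> = (\<Sum>j\<in>UNIV. (norm (x j))^2) - 2 * inner (\<Sum>j\<in>UNIV. x j) xb + n * (norm xb)^2"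
    by (simp add: sum.distrib sum_subtractf sum_distrib_left inner_sum_left n_def)
  also have "\<dots> = (\<Sum>j\<in>UNIV. (norm (x j))^2) - n * (norm xb)^2"
    unfolding sx by (simp add: power2_norm_eq_inner)
  finally show ?thesis .
qed

lemma Z_lower:
  fixes s :: "'i::finite \<Rightarrow> real"
  shows "real CARD('i) * exp ((\<Sum>k\<in>UNIV. s k) / real CARD('i)) \<le> (\<Sum>k\<in>UNIV. exp (s k))"
proof -
  define mu where "mu = (\<Sum>k\<in>UNIV. s k) / real CARD('i)"
  have "\<And>k. exp mu * (1 + (s k - mu)) \<le> exp (s k)"
  proof -
    fix k
    have "1 + (s k - mu) \<le> exp (s k - mu)" by (rule exp_ge_add_one_self)
    hence "exp mu * (1 + (s k - mu)) \<le> exp mu * exp (s k - mu)" by simp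
    thus "exp mu * (1 + (s k - mu)) \<le> exp (s k)" by (simp add: exp_diff)
  qed
  hence "(\<Sum>k\<in>UNIV. exp mu * (1 + (s k - mu))) \<le> (\<Sum>k\<in>UNIV. exp (s k))" by (intro sum_mono)
  moreover have "(\<Sum>k\<in>UNIV. exp mu * (1 + (s k - mu))) = real CARD('i) * exp mu"
    unfolding mu_def by (simp add: sum_distrib_left[symmetric] sum.distrib sum_subtractf)
  ultimately show ?thesis unfolding mu_def by simp
qed

lemma mv_sum: "(W::real^'d^'e) *v (\<Sum>k\<in>S. x k) = (\<Sum>k\<in>S. W *v x k)"
  using linear_sum[OF matrix_vector_mul_linear, of W x S] by (simp add: o_def)


lemma row_bound:
  fixes x e :: "'n::finite \<Rightarrow> real^'d" and w xi ei c :: "real^'d" and W :: "real^'d^'d"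
    and p :: "'n \<Rightarrow> real"
  assumes x: "\<And>j. norm (x j) \<le> 1" and xi: "norm xi \<le> 1" and w: "norm w \<le> 1"
    and WG: "spec_norm W \<le> G"
    and p0: "\<And>j. p j \<ge> 0" and p1: "(\<Sum>j\<in>UNIV. p j) = 1" and pub: "\<And>j. p j \<le> B"
  shows "(\<Sum>j\<in>UNIV. p j * inner (e j) w
           + p j * ((inner ei (W *v x j) + inner xi (W *v e j))
               - (\<Sum>k\<in>UNIV. p k * (inner ei (W *v x k) + inner xi (W *v e k)))) * inner (x j) w)
         \<le> (1+2*G) * (\<Sum>j\<in>UNIV. p j * norm (e j)) + G * norm ei * (B * (\<Sum>j\<in>UNIV. (norm (x j - c))^2))"
proof -
  define y where "y j = inner (x j) w" for j
  define yh where "yh = (\<Sum>k\<in>UNIV. p k * y k)"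
  define u where "u j = inner ei (W *v x j)" for j
  define v where "v j = inner xi (W *v e j)" for j
  define g where "g = ei v* W"
  have G0: "G \<ge> 0" using spec_nonneg[of W] WG by linarith
  have ug: "u j = inner g (x j)" for j unfolding u_def g_def by (simp add: dot_lmul_matrix)
  have yb: "\<bar>y j\<bar> \<le> 1" for j
  proof -
    have "\<bar>y j\<bar> \<le> norm (x j) * norm w" unfolding y_def by (rule Cauchy_Schwarz_ineq2)
    also have "\<dots> \<le> 1 * 1" using x[of j] w by (intro mult_mono) auto
    finally show ?thesis by simp
  qed
  have yhb: "\<bar>yh\<bar> \<le> 1"
  proof -
    have "\<bar>yh\<bar> \<le> (\<Sum>k\<in>UNIV. \<bar>p k * y k\<bar>)" unfolding yh_def by (rule sum_abs)
    also have "\<dots> \<le> (\<Sum>k\<in>UNIV. p k * 1)"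
      by (intro sum_mono) (use p0 yb in \<open>auto simp: abs_mult intro: mult_left_le\<close>)
    finally show ?thesis using p1 by simp
  qed
  have vb: "\<bar>v j\<bar> \<le> G * norm (e j)" for j
  proof -
    have "\<bar>v j\<bar> \<le> norm xi * norm (W *v e j)" unfolding v_def by (rule Cauchy_Schwarz_ineq2)
    also have "\<dots> \<le> 1 * (G * norm (e j))" using xi spec_bound[OF WG, of "e j"] by (intro mult_mono) auto
    finally show ?thesis by simp
  qed
  have gb: "norm g \<le> G * norm ei" unfolding g_def by (rule spec_bound_left[OF WG])
  have LHS: "(\<Sum>j\<in>UNIV. p j * inner (e j) w
           + p j * ((inner ei (W *v x j) + inner xi (W *v e j))
               - (\<Sum>k\<in>UNIV. p k * (inner ei (W *v x k) + inner xi (W *v e k)))) * inner (x j) w)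
      = (\<Sum>j\<in>UNIV. p j * inner (e j) w) + (\<Sum>j\<in>UNIV. p j * u j * (y j - yh))
        + (\<Sum>j\<in>UNIV. p j * v j * (y j - yh))"
  proof -
    define M where "M = (\<Sum>k\<in>UNIV. p k * (u k + v k))"
    have "(\<Sum>j\<in>UNIV. p j * (u j + v j - M) * y j) = (\<Sum>j\<in>UNIV. p j * (u j + v j) * y j) - M * yh"
      unfolding yh_def by (simp add: algebra_simps sum_subtractf sum_distrib_left)
    also have "\<dots> = (\<Sum>j\<in>UNIV. p j * (u j + v j) * (y j - yh))"
      unfolding M_def by (simp add: algebra_simps sum_subtractf sum_distrib_left sum_distrib_right)
    also have "\<dots> = (\<Sum>j\<in>UNIV. p j * u j * (y j - yh))
        + (\<Sum>j\<in>UNIV. p j * v j * (y j - yh))"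
      by (subst sum.distrib[symmetric]) (rule sum.cong, simp_all add: algebra_simps)
    finally have "(\<Sum>j\<in>UNIV. p j * (u j + v j - M) * y j) = (\<Sum>j\<in>UNIV. p j * u j * (y j - yh))
        + (\<Sum>j\<in>UNIV. p j * v j * (y j - yh))" .
    thus ?thesis unfolding M_def u_def v_def y_def by (simp add: sum.distrib)
  qed
  have T1: "(\<Sum>j\<in>UNIV. p j * inner (e j) w) \<le> (\<Sum>j\<in>UNIV. p j * norm (e j))"
  proof (intro sum_mono)
    fix j
    have "inner (e j) w \<le> norm (e j) * norm w" by (rule norm_cauchy_schwarz)
    also have "\<dots> \<le> norm (e j)" using w by (simp add: mult_left_le)
    finally show "p j * inner (e j) w \<le> p j * norm (e j)" using p0[of j] by (simp add: mult_left_mono)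
  qed
  have T3: "(\<Sum>j\<in>UNIV. p j * v j * (y j - yh)) \<le> (\<Sum>j\<in>UNIV. p j * (2 * G * norm (e j)))"
  proof (intro sum_mono)
    fix j
    have "v j * (y j - yh) \<le> \<bar>v j\<bar> * \<bar>y j - yh\<bar>" by (simp add: abs_mult[symmetric])
    also have "\<dots> \<le> (G * norm (e j)) * 2"
      using vb[of j] yb[of j] yhb by (intro mult_mono) auto
    finally have "v j * (y j - yh) \<le> 2 * G * norm (e j)" by simp
    hence "p j * (v j * (y j - yh)) \<le> p j * (2 * G * norm (e j))"
      using p0[of j] by (rule mult_left_mono)
    thus "p j * v j * (y j - yh) \<le> p j * (2 * G * norm (e j))" by (simp add: mult.assoc)
  qed
  have T2: "(\<Sum>j\<in>UNIV. p j * u j * (y j - yh)) \<le> G * norm ei * (B * (\<Sum>j\<in>UNIV. (norm (x j - c))^2))"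
  proof -
    have "(\<Sum>j\<in>UNIV. p j * u j * (y j - yh)) \<le> norm g * (\<Sum>j\<in>UNIV. p j * (norm (x j - c))^2)"
      using row_var[OF p0 p1 w, of g x c] unfolding ug yh_def y_def by (simp add: inner_commute)
    also have "\<dots> \<le> (G * norm ei) * (\<Sum>j\<in>UNIV. B * (norm (x j - c))^2)"
    proof -
      have B0: "B \<ge> 0" using p0[of undefined] pub[of undefined] by linarith
      have "(\<Sum>j\<in>UNIV. p j * (norm (x j - c))^2) \<le> (\<Sum>j\<in>UNIV. B * (norm (x j - c))^2)"
        by (intro sum_mono mult_right_mono pub) auto
      moreover have "0 \<le> (\<Sum>j\<in>UNIV. p j * (norm (x j - c))^2)" by (intro sum_nonneg mult_nonneg_nonneg p0) auto
      ultimately show ?thesis using gb G0 by (intro mult_mono) auto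
    qed
    finally show ?thesis by (simp add: sum_distrib_left)
  qed
  have "(\<Sum>j\<in>UNIV. p j * (2 * G * norm (e j))) = 2 * G * (\<Sum>j\<in>UNIV. p j * norm (e j))"
    by (simp add: sum_distrib_left algebra_simps)
  thus ?thesis unfolding LHS using T1 T2 T3 by (simp add: algebra_simps)
qed


lemma score_bound:
  fixes x :: "'n::finite \<Rightarrow> real^'d" and W :: "real^'d^'d"
  assumes x: "\<And>j. norm (x j) \<le> 1" and WG: "spec_norm W \<le> G"
  shows "\<bar>inner (x i) (W *v x j)\<bar> \<le> G"
proof -
  have G0: "G \<ge> 0" using spec_nonneg[of W] WG by linarith
  have "\<bar>inner (x i) (W *v x j)\<bar> \<le> norm (x i) * norm (W *v x j)" by (rule Cauchy_Schwarz_ineq2)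
  also have "\<dots> \<le> 1 * (G * 1)"
    using x[of i] spec_bound[OF WG, of "x j"] x[of j] G0
    by (intro mult_mono) (auto intro: order_trans mult_left_le)
  finally show ?thesis by simp
qed

lemma p_upper:
  fixes x :: "'n::finite \<Rightarrow> real^'d" and W :: "real^'d^'d"
  assumes x: "\<And>j. norm (x j) \<le> 1" and WG: "spec_norm W \<le> G"
  shows "exp (inner (x i) (W *v x j)) / (\<Sum>k\<in>UNIV. exp (inner (x i) (W *v x k)))
         \<le> exp (2*G) / real CARD('n)"
proof -
  have n: "real CARD('n) > 0" by simp
  have num: "exp (inner (x i) (W *v x j)) \<le> exp G"
    using score_bound[of x W G i j, OF x WG] by simp
  have "(\<Sum>k\<in>(UNIV::'n set). exp (-G)) \<le> (\<Sum>k\<in>UNIV. exp (inner (x i) (W *v x k)))"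
    using score_bound[of x W G i, OF x WG] by (intro sum_mono) (simp add: abs_le_iff, smt (verit))
  hence den: "real CARD('n) * exp (-G) \<le> (\<Sum>k\<in>UNIV. exp (inner (x i) (W *v x k)))" by simp
  have dpos: "real CARD('n) * exp (-G) > 0" by simp
  have "exp (inner (x i) (W *v x j)) / (\<Sum>k\<in>UNIV. exp (inner (x i) (W *v x k)))
      \<le> exp G / (real CARD('n) * exp (-G))"
    using num den dpos by (intro frac_le) auto
  also have "\<dots> = exp (2*G) / real CARD('n)" by (simp add: exp_minus field_simps exp_add[symmetric])
  finally show ?thesis .
qed

lemma col_bound:
  fixes x :: "'n::finite \<Rightarrow> real^'d" and W :: "real^'d^'d"
  assumes x: "\<And>j. norm (x j) \<le> 1" and WG: "spec_norm W \<le> G"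
  defines "xb \<equiv> (1 / real CARD('n)) *\<^sub>R (\<Sum>k\<in>UNIV. x k)"
  shows "(1+2*G) * (\<Sum>i\<in>UNIV. exp (inner (x i) (W *v x j)) / (\<Sum>k\<in>UNIV. exp (inner (x i) (W *v x k))))
         + G * exp (2*G) * (1 - (norm xb)^2) \<le> (1+2*G) * exp (2*G)"
proof -
  define n where "n = real CARD('n)"
  have n: "n > 0" unfolding n_def by simp
  define m where "m = norm xb"
  have G0: "G \<ge> 0" using spec_nonneg[of W] WG by linarith
  have m0: "0 \<le> m" unfolding m_def by simp
  have m1: "m \<le> 1"
  proof -
    have "norm (\<Sum>k\<in>UNIV. x k) \<le> (\<Sum>k\<in>UNIV. norm (x k))" by (rule norm_sum)
    also have "\<dots> \<le> (\<Sum>k\<in>(UNIV::'n set). 1)" by (rule sum_mono) (rule x)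
    finally have "norm (\<Sum>k\<in>UNIV. x k) \<le> n" unfolding n_def by simp
    thus ?thesis unfolding m_def xb_def using n by (simp add: n_def[symmetric] divide_le_eq)
  qed
  define P where "P i = exp (inner (x i) (W *v x j)) / (\<Sum>k\<in>UNIV. exp (inner (x i) (W *v x k)))" for i
  define gg where "gg = W *v (x j - xb)"
  define a where "a = G * (1 + m)"
  have a0: "a \<ge> 0" unfolding a_def using G0 m0 by simp
  have ggb: "norm gg \<le> a"
  proof -
    have "norm gg \<le> G * norm (x j - xb)" unfolding gg_def by (rule spec_bound[OF WG])
    also have "norm (x j - xb) \<le> 1 + m" unfolding m_def using x[of j] norm_triangle_ineq4[of "x j" xb] by linarith
    hence "G * norm (x j - xb) \<le> G * (1 + m)" using G0 by (intro mult_left_mono) auto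
    finally show ?thesis unfolding a_def .
  qed
  have Pb: "P i \<le> exp (inner (x i) gg) / n" for i
  proof -
    define mu where "mu = (\<Sum>k\<in>UNIV. inner (x i) (W *v x k)) / n"
    have mu: "mu = inner (x i) (W *v xb)"
      unfolding mu_def xb_def n_def by (simp add: matrix_vector_mult_scaleR mv_sum inner_sum_right)
    have Z: "n * exp mu \<le> (\<Sum>k\<in>UNIV. exp (inner (x i) (W *v x k)))"
      unfolding mu_def n_def by (rule Z_lower)
    have "P i \<le> exp (inner (x i) (W *v x j)) / (n * exp mu)"
      unfolding P_def using Z n by (intro divide_left_mono) (auto intro!: mult_pos_pos sum_pos)
    also have "\<dots> = exp (inner (x i) (W *v x j) - mu) / n" by (simp add: exp_diff)
    also have "inner (x i) (W *v x j) - mu = inner (x i) gg"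
      unfolding mu gg_def by (simp add: matrix_vector_mult_diff_distrib inner_diff_right)
    finally show ?thesis .
  qed
  have K: "(1+2*G) * (\<Sum>i\<in>UNIV. P i) + G * exp (2*G) * (1 - m^2) \<le> (1+2*G) * exp (2*G)"
  proof (cases "a = 0")
    case True
    hence "G = 0" unfolding a_def using m0 G0 by (simp add: add_nonneg_eq_0_iff)
    have "(\<Sum>i\<in>UNIV. P i) \<le> (\<Sum>i\<in>(UNIV::'n set). exp (2*G) / n)"
      unfolding P_def n_def by (rule sum_mono) (rule p_upper[OF x WG])
    also have "\<dots> = 1" using \<open>G = 0\<close> n by (simp add: n_def)
    finally show ?thesis using \<open>G = 0\<close> by simp
  next
    case False
    hence apos: "a > 0" using a0 by simp
    have ch: "2*a*exp (inner (x i) gg) \<le> (a + inner (x i) gg)*exp a + (a - inner (x i) gg)*exp (-a)" for i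
    proof (rule chord_exp)
      have "\<bar>inner (x i) gg\<bar> \<le> norm (x i) * norm gg" by (rule Cauchy_Schwarz_ineq2)
      also have "\<dots> \<le> 1 * a" using x[of i] ggb by (intro mult_mono) auto
      finally show "\<bar>inner (x i) gg\<bar> \<le> a" by simp
    qed
    have sumx: "(\<Sum>i\<in>UNIV. inner (x i) gg) = n * inner xb gg"
      unfolding xb_def n_def by (simp add: inner_sum_left)
    have xbg: "inner xb gg \<le> m * a"
    proof -
      have "inner xb gg \<le> norm xb * norm gg" by (rule norm_cauchy_schwarz)
      also have "\<dots> \<le> m * a" unfolding m_def using ggb by (intro mult_left_mono) auto
      finally show ?thesis .
    qed
    have ea: "exp (-a) \<le> exp a" using a0 by simp
    have "2*a*(\<Sum>i\<in>UNIV. exp (inner (x i) gg)) \<le> (\<Sum>i\<in>UNIV. (a + inner (x i) gg)*exp a + (a - inner (x i) gg)*exp (-a))"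
      unfolding sum_distrib_left by (intro sum_mono ch)
    also have "\<dots> = n * a * (exp a + exp (-a)) + (\<Sum>i\<in>UNIV. inner (x i) gg) * (exp a - exp (-a))"
      by (simp add: sum.distrib sum_subtractf algebra_simps sum_distrib_right sum_distrib_left n_def)
    also have "\<dots> \<le> n * a * (exp a + exp (-a)) + (n * (m * a)) * (exp a - exp (-a))"
      unfolding sumx using xbg n ea by (intro add_left_mono mult_right_mono mult_left_mono) auto
    finally have "a * (2*(\<Sum>i\<in>UNIV. exp (inner (x i) gg))) \<le> a * (n * ((1+m) * exp a + (1-m) * exp (-a)))"
      by (simp add: algebra_simps)
    hence "2*(\<Sum>i\<in>UNIV. exp (inner (x i) gg)) \<le> n * ((1+m) * exp a + (1-m) * exp (-a))"
      using apos by (simp only: mult_le_cancel_left_pos)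
    hence S: "(\<Sum>i\<in>UNIV. exp (inner (x i) gg)) / n \<le> ((1+m) * exp a + (1-m) * exp (-a)) / 2"
      using apos n by (simp add: field_simps)
    have "(\<Sum>i\<in>UNIV. P i) \<le> (\<Sum>i\<in>UNIV. exp (inner (x i) gg) / n)" by (intro sum_mono Pb)
    also have "\<dots> = (\<Sum>i\<in>UNIV. exp (inner (x i) gg)) / n" by (simp add: sum_divide_distrib)
    finally have "(\<Sum>i\<in>UNIV. P i) \<le> ((1+m) * exp a + (1-m) * exp (-a)) / 2" using S by linarith
    hence "(1+2*G) * (\<Sum>i\<in>UNIV. P i) \<le> (1+2*G) * (((1+m) * exp a + (1-m) * exp (-a)) / 2)"
      using G0 by (intro mult_left_mono) auto
    moreover have "(1+2*G) * ((1+m) * exp a + (1-m) * exp (-a)) / 2 + G * exp (2*G) * (1 - m^2)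
        \<le> (1+2*G) * exp (2*G)" unfolding a_def by (rule final_ineq[OF G0 m0 m1])
    ultimately show ?thesis by simp
  qed
  thus ?thesis unfolding P_def m_def .
qed


lemma point_bound:
  fixes x e w :: "'n::finite \<Rightarrow> real^'d" and W :: "real^'d^'d"
  assumes x: "\<And>j. norm (x j) \<le> 1" and w: "\<And>i. norm (w i) \<le> 1" and WG: "spec_norm W \<le> G"
  shows "(\<Sum>i\<in>UNIV. \<Sum>j\<in>UNIV.
            exp (inner (x i) (W *v x j)) / (\<Sum>k\<in>UNIV. exp (inner (x i) (W *v x k))) * inner (e j) (w i)
          + exp (inner (x i) (W *v x j)) / (\<Sum>k\<in>UNIV. exp (inner (x i) (W *v x k)))
            * ((inner (e i) (W *v x j) + inner (x i) (W *v e j))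
               - (\<Sum>k\<in>UNIV. exp (inner (x i) (W *v x k)) / (\<Sum>k\<in>UNIV. exp (inner (x i) (W *v x k)))
                    * (inner (e i) (W *v x k) + inner (x i) (W *v e k)))) * inner (x j) (w i))
         \<le> (1+2*G) * exp (2*G) * (\<Sum>j\<in>UNIV. norm (e j))"
proof -
  define P where "P i j = exp (inner (x i) (W *v x j)) / (\<Sum>k\<in>UNIV. exp (inner (x i) (W *v x k)))" for i j
  define n where "n = real CARD('n)"
  define B where "B = exp (2*G) / n"
  define xb where "xb = (1 / n) *\<^sub>R (\<Sum>k\<in>UNIV. x k)"
  define m where "m = norm xb"
  have n: "n > 0" unfolding n_def by simp
  have G0: "G \<ge> 0" using spec_nonneg[of W] WG by linarith
  have P0: "P i j \<ge> 0" for i j unfolding P_def by (intro divide_nonneg_pos sum_pos) auto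
  have P1: "(\<Sum>j\<in>UNIV. P i j) = 1" for i
  proof -
    have "(\<Sum>k\<in>UNIV. exp (inner (x i) (W *v x k))) > 0" by (intro sum_pos) auto
    thus ?thesis unfolding P_def by (simp add: sum_divide_distrib[symmetric])
  qed
  have Pub: "P i j \<le> B" for i j unfolding P_def B_def n_def by (rule p_upper[OF x WG])
  have var: "B * (\<Sum>j\<in>UNIV. (norm (x j - xb))^2) \<le> exp (2*G) * (1 - m^2)"
  proof -
    have "(\<Sum>j\<in>UNIV. (norm (x j - xb))^2) = (\<Sum>j\<in>UNIV. (norm (x j))^2) - n * m^2"
      unfolding xb_def m_def n_def by (rule var_uniform)
    also have "(\<Sum>j\<in>UNIV. (norm (x j))^2) \<le> (\<Sum>j\<in>(UNIV::'n set). 1)"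
      using x by (intro sum_mono) (simp add: power_le_one)
    finally have "(\<Sum>j\<in>UNIV. (norm (x j - xb))^2) \<le> n * (1 - m^2)" by (simp add: n_def algebra_simps)
    hence "B * (\<Sum>j\<in>UNIV. (norm (x j - xb))^2) \<le> B * (n * (1 - m^2))"
      unfolding B_def using n by (intro mult_left_mono) auto
    also have "\<dots> = exp (2*G) * (1 - m^2)" unfolding B_def using n by simp
    finally show ?thesis .
  qed
  have row: "(\<Sum>j\<in>UNIV. P i j * inner (e j) (w i)
          + P i j * ((inner (e i) (W *v x j) + inner (x i) (W *v e j))
             - (\<Sum>k\<in>UNIV. P i k * (inner (e i) (W *v x k) + inner (x i) (W *v e k)))) * inner (x j) (w i))
      \<le> (1+2*G) * (\<Sum>j\<in>UNIV. P i j * norm (e j)) + G * exp (2*G) * (1 - m^2) * norm (e i)" for i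
  proof -
    have "(\<Sum>j\<in>UNIV. P i j * inner (e j) (w i)
          + P i j * ((inner (e i) (W *v x j) + inner (x i) (W *v e j))
             - (\<Sum>k\<in>UNIV. P i k * (inner (e i) (W *v x k) + inner (x i) (W *v e k)))) * inner (x j) (w i))
      \<le> (1+2*G) * (\<Sum>j\<in>UNIV. P i j * norm (e j)) + G * norm (e i) * (B * (\<Sum>j\<in>UNIV. (norm (x j - xb))^2))"
      by (rule row_bound[OF x x w WG P0 P1 Pub])
    also have "G * norm (e i) * (B * (\<Sum>j\<in>UNIV. (norm (x j - xb))^2)) \<le> G * norm (e i) * (exp (2*G) * (1 - m^2))"
      using var G0 by (intro mult_left_mono) auto
    finally show ?thesis by (simp add: algebra_simps)
  qed
  have "(\<Sum>i\<in>UNIV. \<Sum>j\<in>UNIV. P i j * inner (e j) (w i)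
          + P i j * ((inner (e i) (W *v x j) + inner (x i) (W *v e j))
             - (\<Sum>k\<in>UNIV. P i k * (inner (e i) (W *v x k) + inner (x i) (W *v e k)))) * inner (x j) (w i))
      \<le> (\<Sum>i\<in>UNIV. (1+2*G) * (\<Sum>j\<in>UNIV. P i j * norm (e j)) + G * exp (2*G) * (1 - m^2) * norm (e i))"
    by (intro sum_mono row)
  also have "\<dots> = (\<Sum>j\<in>UNIV. norm (e j) * ((1+2*G) * (\<Sum>i\<in>UNIV. P i j) + G * exp (2*G) * (1 - m^2)))"
  proof -
    define K where "K = G * exp (2*G) * (1 - m^2)"
    have "(\<Sum>i\<in>UNIV. (1+2*G) * (\<Sum>j\<in>UNIV. P i j * norm (e j)) + K * norm (e i))
        = (1+2*G) * (\<Sum>i\<in>UNIV. \<Sum>j\<in>UNIV. P i j * norm (e j)) + K * (\<Sum>i\<in>UNIV. norm (e i))"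
      by (simp add: sum.distrib sum_distrib_left)
    also have "(\<Sum>i\<in>UNIV. \<Sum>j\<in>UNIV. P i j * norm (e j)) = (\<Sum>j\<in>UNIV. \<Sum>i\<in>UNIV. P i j * norm (e j))"
      by (rule sum.swap)
    also have "(1+2*G) * (\<Sum>j\<in>UNIV. \<Sum>i\<in>UNIV. P i j * norm (e j)) + K * (\<Sum>i\<in>UNIV. norm (e i))
        = (\<Sum>j\<in>UNIV. norm (e j) * ((1+2*G) * (\<Sum>i\<in>UNIV. P i j) + K))"
      by (simp add: sum.distrib sum_distrib_left sum_distrib_right algebra_simps)
    finally show ?thesis unfolding K_def by simp
  qed
  also have "\<dots> \<le> (\<Sum>j\<in>UNIV. norm (e j) * ((1+2*G) * exp (2*G)))"
  proof (intro sum_mono mult_left_mono)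
    fix j
    show "(1+2*G) * (\<Sum>i\<in>UNIV. P i j) + G * exp (2*G) * (1 - m^2) \<le> (1+2*G) * exp (2*G)"
      unfolding P_def m_def xb_def n_def by (rule col_bound[OF x WG])
  qed simp
  also have "\<dots> = (1+2*G) * exp (2*G) * (\<Sum>j\<in>UNIV. norm (e j))"
    by (simp add: sum_distrib_left sum_distrib_right mult.commute)
  finally show ?thesis unfolding P_def .
qed


lemma bilin_deriv:
  fixes a b c d :: "real^'d" and W :: "real^'d^'d"
  shows "((\<lambda>t. inner (a + t *\<^sub>R b) (W *v (c + t *\<^sub>R d))) has_real_derivative
          inner b (W *v (c + t *\<^sub>R d)) + inner (a + t *\<^sub>R b) (W *v d)) (at t)"
proof -
  have eq: "(\<lambda>t. inner (a + t *\<^sub>R b) (W *v (c + t *\<^sub>R d)))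
      = (\<lambda>t. inner a (W *v c) + t * inner b (W *v c) + t * inner a (W *v d) + t * t * inner b (W *v d))"
    by (simp add: matrix_vector_right_distrib matrix_vector_mult_scaleR inner_add_left inner_add_right algebra_simps)
  have "((\<lambda>t. inner a (W *v c) + t * inner b (W *v c) + t * inner a (W *v d) + t * t * inner b (W *v d))
     has_real_derivative inner b (W *v c) + inner a (W *v d) + 2 * t * inner b (W *v d)) (at t)"
    by (auto intro!: derivative_eq_intros)
  moreover have "inner b (W *v c) + inner a (W *v d) + 2 * t * inner b (W *v d)
     = inner b (W *v (c + t *\<^sub>R d)) + inner (a + t *\<^sub>R b) (W *v d)"
    by (simp add: matrix_vector_right_distrib matrix_vector_mult_scaleR inner_add_left inner_add_right algebra_simps)
  ultimately show ?thesis unfolding eq by simp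
qed

lemma rowS:
  fixes M :: "real^'d^'n" and W :: "real^'d^'d"
  shows "(softmax (M ** W ** transpose M) ** M) $ i
    = (\<Sum>j\<in>UNIV. (exp (inner (M$i) (W *v M$j)) / (\<Sum>k\<in>UNIV. exp (inner (M$i) (W *v M$k)))) *\<^sub>R M$j)"
  by (simp only: softmax_def vec_lambda_beta score_entry) (simp only: mult_row vec_lambda_beta)

lemma rowS_norm:
  fixes M :: "real^'d^'n" and W :: "real^'d^'d"
  assumes "\<And>j. norm (M$j) \<le> 1"
  shows "norm ((softmax (M ** W ** transpose M) ** M) $ i) \<le> 1"
proof -
  define P where "P j = exp (inner (M$i) (W *v M$j)) / (\<Sum>k\<in>UNIV. exp (inner (M$i) (W *v M$k)))" for j
  have P0: "P j \<ge> 0" for j unfolding P_def by (intro divide_nonneg_pos sum_pos) auto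
  have P1: "(\<Sum>j\<in>UNIV. P j) = 1"
  proof -
    have "(\<Sum>k\<in>UNIV. exp (inner (M$i) (W *v M$k))) > 0" by (intro sum_pos) auto
    thus ?thesis unfolding P_def by (simp add: sum_divide_distrib[symmetric])
  qed
  have "norm ((softmax (M ** W ** transpose M) ** M) $ i) = norm (\<Sum>j\<in>UNIV. P j *\<^sub>R M$j)"
    unfolding rowS P_def ..
  also have "\<dots> \<le> (\<Sum>j\<in>UNIV. norm (P j *\<^sub>R M$j))" by (rule norm_sum)
  also have "\<dots> \<le> (\<Sum>j\<in>UNIV. P j * 1)"
    using P0 assms by (intro sum_mono) (simp add: mult_left_le)
  finally show ?thesis using P1 by simp
qed

lemma rowA_norm:
  fixes M :: "real^'d^'n" and W V :: "real^'d^'d"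
  assumes "\<And>j. norm (M$j) \<le> 1" and "spec_norm V \<le> 1"
  shows "norm ((softmax (M ** W ** transpose M) ** M ** V) $ i) \<le> 1"
proof -
  have "norm ((softmax (M ** W ** transpose M) ** M ** V) $ i)
      = norm (((softmax (M ** W ** transpose M) ** M) $ i) v* V)" by (simp add: mult_row_V)
  also have "\<dots> \<le> 1 * norm ((softmax (M ** W ** transpose M) ** M) $ i)"
    by (rule spec_bound_left[OF assms(2)])
  also have "\<dots> \<le> 1" using rowS_norm[OF assms(1)] by simp
  finally show ?thesis .
qed

lemma norm_2inf_le: "norm_2inf (Z::real^'d^'n) \<le> c \<longleftrightarrow> (\<forall>i. norm (Z$i) \<le> c)"
  unfolding norm_2inf_def by (subst Max_le_iff) auto


theorem lemma2:
  fixes X E :: "real^'d^'n" and V W :: "real^'d^'d" and \<Gamma> :: real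
  assumes "norm_2inf X \<le> 1"
    and "norm_2inf (X + E) \<le> 1"
    and "spec_norm V \<le> 1"
    and "spec_norm W \<le> \<Gamma>"
  shows "norm_2inf (softmax (X ** W ** transpose X) ** X ** V) \<le> 1
       \<and> norm_2inf (softmax ((X + E) ** W ** transpose (X + E)) ** (X + E) ** V) \<le> 1
       \<and> norm_21 (softmax (X ** W ** transpose X) ** X ** V
                   - softmax ((X + E) ** W ** transpose (X + E)) ** (X + E) ** V)
           \<le> (2 * \<Gamma> + 1) * exp (2 * \<Gamma>) * norm_21 E"
proof -
  have rX: "\<And>j. norm (X$j) \<le> 1" using assms(1) norm_2inf_le by blast
  have rXb: "\<And>j. norm ((X+E)$j) \<le> 1" using assms(2) norm_2inf_le by blast
  have c1: "norm_2inf (softmax (X ** W ** transpose X) ** X ** V) \<le> 1"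
    unfolding norm_2inf_le using rowA_norm[OF rX assms(3)] by blast
  have c2: "norm_2inf (softmax ((X + E) ** W ** transpose (X + E)) ** (X + E) ** V) \<le> 1"
    unfolding norm_2inf_le using rowA_norm[OF rXb assms(3)] by blast
  define D where "D i = (softmax ((X + E) ** W ** transpose (X + E)) ** (X + E)) $ i
                       - (softmax (X ** W ** transpose X) ** X) $ i" for i
  have red: "norm_21 (softmax (X ** W ** transpose X) ** X ** V
                   - softmax ((X + E) ** W ** transpose (X + E)) ** (X + E) ** V)
             \<le> (\<Sum>i\<in>UNIV. norm (D i))"
    unfolding norm_21_def
  proof (intro sum_mono)
    fix i
    have "(softmax (X ** W ** transpose X) ** X ** V
                   - softmax ((X + E) ** W ** transpose (X + E)) ** (X + E) ** V) $ i
        = (- D i) v* V"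
      unfolding D_def by (simp add: mult_row_V vector_matrix_mult_diff_distrib)
    hence "norm ((softmax (X ** W ** transpose X) ** X ** V
                   - softmax ((X + E) ** W ** transpose (X + E)) ** (X + E) ** V) $ i)
        \<le> 1 * norm (- D i)"
      using spec_bound_left[OF assms(3), of "- D i"] by simp
    thus "norm ((softmax (X ** W ** transpose X) ** X ** V
                   - softmax ((X + E) ** W ** transpose (X + E)) ** (X + E) ** V) $ i)
        \<le> norm (D i)" by simp
  qed
  define xt where "xt t j = X$j + t *\<^sub>R E$j" for t j
  define w where "w i = (if D i = 0 then 0 else (1 / norm (D i)) *\<^sub>R D i)" for i
  have wn: "norm (w i) \<le> 1" for i unfolding w_def by auto
  have wD: "inner (D i) (w i) = norm (D i)" for i
    unfolding w_def by (simp add: power2_norm_eq_inner[symmetric] power2_eq_square)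
  define h where "h t = (\<Sum>i\<in>UNIV. \<Sum>j\<in>UNIV. exp (inner (xt t i) (W *v xt t j))
        / (\<Sum>k\<in>UNIV. exp (inner (xt t i) (W *v xt t k))) * inner (xt t j) (w i))" for t
  define h' where "h' t = (\<Sum>i\<in>UNIV. \<Sum>j\<in>UNIV.
            exp (inner (xt t i) (W *v xt t j)) / (\<Sum>k\<in>UNIV. exp (inner (xt t i) (W *v xt t k))) * inner (E$j) (w i)
          + exp (inner (xt t i) (W *v xt t j)) / (\<Sum>k\<in>UNIV. exp (inner (xt t i) (W *v xt t k)))
            * ((inner (E$i) (W *v xt t j) + inner (xt t i) (W *v E$j))
               - (\<Sum>k\<in>UNIV. exp (inner (xt t i) (W *v xt t k)) / (\<Sum>k\<in>UNIV. exp (inner (xt t i) (W *v xt t k)))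
                    * (inner (E$i) (W *v xt t k) + inner (xt t i) (W *v E$k)))) * inner (xt t j) (w i))" for t
  have hrow: "h t = (\<Sum>i\<in>UNIV. inner ((softmax (M ** W ** transpose M) ** M) $ i) (w i))"
    if "\<And>j. xt t j = M $ j" for t M
    unfolding h_def rowS inner_sum_left inner_scaleR_left that by simp
  have h1: "h 1 = (\<Sum>i\<in>UNIV. inner ((softmax ((X + E) ** W ** transpose (X + E)) ** (X + E)) $ i) (w i))"
    by (rule hrow) (simp add: xt_def)
  have h0: "h 0 = (\<Sum>i\<in>UNIV. inner ((softmax (X ** W ** transpose X) ** X) $ i) (w i))"
    by (rule hrow) (simp add: xt_def)
  have hdiff: "h 1 - h 0 = (\<Sum>i\<in>UNIV. norm (D i))"
  proof -
    have "h 1 - h 0 = (\<Sum>i\<in>UNIV. inner (D i) (w i))"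
      unfolding h1 h0 D_def by (simp add: inner_diff_left sum_subtractf)
    also have "\<dots> = (\<Sum>i\<in>UNIV. norm (D i))" using wD by simp
    finally show ?thesis .
  qed
  have deriv: "(h has_real_derivative h' t) (at t)" for t
  proof -
    have "((\<lambda>s. \<Sum>i\<in>UNIV. \<Sum>j\<in>UNIV. exp (inner (xt s i) (W *v xt s j))
        / (\<Sum>k\<in>UNIV. exp (inner (xt s i) (W *v xt s k))) * inner (xt s j) (w i)) has_real_derivative h' t) (at t)"
      unfolding h'_def
    proof (rule DERIV_sum)
      fix i :: 'n
      show "((\<lambda>s. \<Sum>j\<in>UNIV. exp (inner (xt s i) (W *v xt s j))
        / (\<Sum>k\<in>UNIV. exp (inner (xt s i) (W *v xt s k))) * inner (xt s j) (w i)) has_real_derivative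
          (\<Sum>j\<in>UNIV.
            exp (inner (xt t i) (W *v xt t j)) / (\<Sum>k\<in>UNIV. exp (inner (xt t i) (W *v xt t k))) * inner (E$j) (w i)
          + exp (inner (xt t i) (W *v xt t j)) / (\<Sum>k\<in>UNIV. exp (inner (xt t i) (W *v xt t k)))
            * ((inner (E$i) (W *v xt t j) + inner (xt t i) (W *v E$j))
               - (\<Sum>k\<in>UNIV. exp (inner (xt t i) (W *v xt t k)) / (\<Sum>k\<in>UNIV. exp (inner (xt t i) (W *v xt t k)))
                    * (inner (E$i) (W *v xt t k) + inner (xt t i) (W *v E$k)))) * inner (xt t j) (w i))) (at t)"
      proof (rule softmax_deriv[where f = "\<lambda>j s. inner (xt s i) (W *v xt s j)" and y = "\<lambda>j s. inner (xt s j) (w i)"])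
        fix j
        show "((\<lambda>s. inner (xt s i) (W *v xt s j)) has_real_derivative
            inner (E$i) (W *v xt t j) + inner (xt t i) (W *v E$j)) (at t)"
          unfolding xt_def by (rule bilin_deriv)
        have "(\<lambda>s. inner (xt s j) (w i)) = (\<lambda>s. inner (X$j) (w i) + s * inner (E$j) (w i))"
          unfolding xt_def by (simp add: inner_add_left)
        moreover have "((\<lambda>s. inner (X$j) (w i) + s * inner (E$j) (w i)) has_real_derivative inner (E$j) (w i)) (at t)"
          by (auto intro!: derivative_eq_intros)
        ultimately show "((\<lambda>s. inner (xt s j) (w i)) has_real_derivative inner (E$j) (w i)) (at t)" by simp
      qed
    qed
    thus ?thesis unfolding h_def[abs_def] .
  qed
  obtain z where z0: "0 < z" and z1: "z < 1" and hz: "h 1 - h 0 = (1 - 0) * h' z"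
    using MVT2[of 0 1 h h'] deriv by auto
  have xtn: "norm (xt z j) \<le> 1" for j
  proof -
    have "xt z j = (1 - z) *\<^sub>R X$j + z *\<^sub>R (X+E)$j" unfolding xt_def by (simp add: algebra_simps)
    hence "norm (xt z j) \<le> (1 - z) * norm (X$j) + z * norm ((X+E)$j)"
      using z0 z1 by (metis norm_triangle_le norm_scaleR abs_of_nonneg less_imp_le diff_ge_0_iff_ge order_refl)
    also have "\<dots> \<le> (1 - z) * 1 + z * 1"
      using z0 z1 rX rXb by (intro add_mono mult_left_mono) auto
    finally show ?thesis by simp
  qed
  have "h' z \<le> (1+2*\<Gamma>) * exp (2*\<Gamma>) * (\<Sum>j\<in>UNIV. norm (E$j))"
    unfolding h'_def by (rule point_bound[OF xtn wn assms(4)])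
  hence c3: "norm_21 (softmax (X ** W ** transpose X) ** X ** V
                   - softmax ((X + E) ** W ** transpose (X + E)) ** (X + E) ** V)
           \<le> (2 * \<Gamma> + 1) * exp (2 * \<Gamma>) * norm_21 E"
    using red hdiff hz unfolding norm_21_def by (simp add: add.commute)
  show ?thesis using c1 c2 c3 by blast
qed

end
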